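(* Let $\alpha,\beta\in\mathsf{Lab}\uplus\underline{\mathsf{Lab}}$ with $\mathsf{und}(\alpha)=(p_\alpha,Rd_\alpha,Wt_\alpha)$, $\mathsf{und}(\beta)=(p_\beta,Rd_\beta,Wt_\beta)$, $Wt_\alpha\subseteq Rd_\alpha$, $Wt_\beta\subseteq Rd_\beta$ and $\alpha\;\iota_{lab}\;\beta$. Suppose $A\to_{ann}^{\alpha}A'$ and $A\to_{ann}^{\beta}A''$. Then $A''\to_{ann}^{\alpha}A'''$ where $A'''=A''\odot^{\alpha}\mathsf{diff}(A\to_{ann}^{\alpha}A')$.
   Context: Fix a set $\mathcal{R}$ of memory resources. Let $\mathsf{PID}=(\mathbb{N}_+)^*$ be the set of finite words over the positive integers, with $\preceq$ the prefix order. An annotation DAG is a triple $A=(V,E_R,E_W)$ such that: (1) $V\subseteq(\mathsf{PID}\times\mathbb{N})\cup\{\bot\}$ is finite, $\bot\in V$, and $(p,n)\in V$ implies $(p,n')\in V$ for all $n'\le n$; (2) $E_R,E_W\subseteq V\times\mathcal{R}\times V$, and $(v',r,v),(v'',r,v)\in E_R\cup E_W$ implies $v'=v''$; (3) $E_R\cap E_W=\varnothing$ and the directed graph $(V,E_R\cup E_W)$ is acyclic; (4) if $(v',r,v)\in E_W$ and $v'\neq\bot$ then $(v'',r,v')\in E_W$ for some $v''$; (5) $(v,r,v'),(v,r,v'')\in E_W$ implies $v'=v''$. For $r\in\mathcal{R}$, $\mathsf{last}(r,E_W)$ is $\bot$ if $E_W$ has no edge labelled $r$, and otherwise is the final node of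 the unique path from $\bot$ consisting of all $E_W$-edges labelled $r$. For $p\in\mathsf{PID}$, $\mathsf{max}_p(V)=\max\{n:(p,n)\in V\}$, or $-1$ if there is no such $n$. Let $\mathsf{Lab}=\mathsf{PID}\times2^{\mathcal{R}}\times2^{\mathcal{R}}$ and $\underline{\mathsf{Lab}}=\{\underline{a}:a\in\mathsf{Lab}\}$ a disjoint copy; $\mathsf{und}(a)=\mathsf{und}(\underline a)=a$. For $a=(p,Rd,Wt)\in\mathsf{Lab}$ and annotation DAGs $A_1=(V_1,E_{R1},E_{W1})$, $A_2=(V_2,E_{R2},E_{W2})$, write $A_1\to_{ann}^{a}A_2$ iff, with $v=(p,\mathsf{max}_p(V_1)+1)$ and $\mathsf{newedge}(r,E_W,v)=(\mathsf{last}(r,E_W),r,v)$: $V_2=V_1\cup\{v\}$, $E_{R2}=E_{R1}\cup\{\mathsf{newedge}(r,E_{W1},v): r\in Rd\setminus Wt\}$, $E_{W2}=E_{W1}\cup\{\mathsf{newedge}(r,E_{W1},v): r\in Wt\}$; and write $A_2\to_{ann}^{\underline a}A_1$ iff $A_1\to_{ann}^{a}A_2$. For $\alpha,\beta\in\mathsf{Lab}\uplus\underline{\mathsf{Lab}}$ with $\mathsf{und}(\alpha)=(p_1,Rd_1,Wt_1)$, $\mathsf{und}(\beta)=(p_2,Rd_2,Wt_2)$, define $\alpha\;\iota_{lab}\;\beta$ iff $p_1\not\preceq p_2$, $p_2\not\preceq p_1$, $Rd_1\cap Wt_2=\varnothing$ and $Rd_2\cap Wt_1=\varnothing$. For $o:(V,E_R,E_W)\to_{ann}^{\alpha}(V',E'_R,E'_W)$,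 $\mathsf{diff}(o)=(V'\setminus V,E'_R\setminus E_R,E'_W\setminus E_W)$ if $\alpha\in\mathsf{Lab}$ and $\mathsf{diff}(o)=(V\setminus V',E_R\setminus E'_R,E_W\setminus E'_W)$ if $\alpha\in\underline{\mathsf{Lab}}$. Also $(V,E_R,E_W)\odot^{\alpha}(\Delta V,\Delta E_R,\Delta E_W)$ is $(V\cup\Delta V,E_R\cup\Delta E_R,E_W\cup\Delta E_W)$ if $\alpha\in\mathsf{Lab}$ and $(V\setminus\Delta V,E_R\setminus\Delta E_R,E_W\setminus\Delta E_W)$ if $\alpha\in\underline{\mathsf{Lab}}$. (In the paper, labels arise from basic blocks for which the set of written resources is contained in the set of read resources; this is recorded here as the hypothesis $Wt\subseteq Rd$.) *)

theory Defs
  imports Main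
begin

(* PID = words over positive integers; represented as nat lists, positivity
   is enforced inside ann_dag (every non-bottom node has a positive PID). *)
type_synonym pid = "nat list"

definition pid_ok :: "pid \<Rightarrow> bool" where
  "pid_ok p \<longleftrightarrow> (\<forall>x\<in>set p. 0 < x)"

(* nodes: None = bottom, Some (p,n) *)
type_synonym node = "(pid \<times> nat) option"
type_synonym 'r edges = "(node \<times> 'r \<times> node) set"
type_synonym 'r ann = "node set \<times> 'r edges \<times> 'r edges"

definition edge_graph :: "'r edges \<Rightarrow> (node \<times> node) set" where
  "edge_graph E = {(u, v). \<exists>r. (u, r, v) \<in> E}"

definition ann_dag :: "'r ann \<Rightarrow> bool" where
  "ann_dag A \<longleftrightarrow> (case A of (V, ER, EW) \<Rightarrow>
     finite V \<and> None \<in> V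
     \<and> (\<forall>p n. Some (p, n) \<in> V \<longrightarrow> pid_ok p)
     \<and> (\<forall>p n n'. Some (p, n) \<in> V \<longrightarrow> n' \<le> n \<longrightarrow> Some (p, n') \<in> V)
     \<and> ER \<subseteq> V \<times> UNIV \<times> V \<and> EW \<subseteq> V \<times> UNIV \<times> V
     \<and> (\<forall>v' v'' r v. (v', r, v) \<in> ER \<union> EW \<longrightarrow> (v'', r, v) \<in> ER \<union> EW \<longrightarrow> v' = v'')
     \<and> ER \<inter> EW = {}
     \<and> acyclic (edge_graph (ER \<union> EW))
     \<and> (\<forall>v' r v. (v', r, v) \<in> EW \<longrightarrow> v' \<noteq> None \<longrightarrow> (\<exists>v''. (v'', r, v') \<in> EW))
     \<and> (\<forall>v r v' v''. (v, r, v') \<in> EW \<longrightarrow> (v, r, v'') \<in> EW \<longrightarrow> v' = v''))"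

definition r_path :: "'r \<Rightarrow> 'r edges \<Rightarrow> node list \<Rightarrow> bool" where
  "r_path r EW vs \<longleftrightarrow> vs \<noteq> [] \<and> hd vs = None
     \<and> {(vs ! i, r, vs ! Suc i) | i. Suc i < length vs} = {e \<in> EW. fst (snd e) = r}"

definition last_w :: "'r \<Rightarrow> 'r edges \<Rightarrow> node" where
  "last_w r EW = (if \<not> (\<exists>u v. (u, r, v) \<in> EW) then None
                  else (THE v. \<exists>vs. r_path r EW vs \<and> last vs = v))"

definition max_p :: "pid \<Rightarrow> node set \<Rightarrow> int" where
  "max_p p V = (if \<exists>n. Some (p, n) \<in> V then int (Max {n. Some (p, n) \<in> V}) else -1)"

definition newedge :: "'r \<Rightarrow> 'r edges \<Rightarrow> node \<Rightarrow> node \<times> 'r \<times> node" where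
  "newedge r EW v = (last_w r EW, r, v)"

type_synonym 'r lab0 = "pid \<times> 'r set \<times> 'r set"

datatype 'r lab = Fwd "'r lab0" | Bwd "'r lab0"

fun und :: "'r lab \<Rightarrow> 'r lab0" where
  "und (Fwd a) = a"
| "und (Bwd a) = a"

definition ann_fwd :: "'r ann \<Rightarrow> 'r lab0 \<Rightarrow> 'r ann \<Rightarrow> bool" where
  "ann_fwd A1 a A2 \<longleftrightarrow> ann_dag A1 \<and> ann_dag A2 \<and>
     (case A1 of (V1, ER1, EW1) \<Rightarrow> case A2 of (V2, ER2, EW2) \<Rightarrow>
      case a of (p, Rd, Wt) \<Rightarrow>
        (let v = Some (p, nat (max_p p V1 + 1)) in
          V2 = V1 \<union> {v}
        \<and> ER2 = ER1 \<union> {newedge r EW1 v | r. r \<in> Rd - Wt}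
        \<and> EW2 = EW1 \<union> {newedge r EW1 v | r. r \<in> Wt}))"

fun ann_step :: "'r ann \<Rightarrow> 'r lab \<Rightarrow> 'r ann \<Rightarrow> bool" where
  "ann_step A1 (Fwd a) A2 = ann_fwd A1 a A2"
| "ann_step A2 (Bwd a) A1 = ann_fwd A1 a A2"

definition prefix_le :: "pid \<Rightarrow> pid \<Rightarrow> bool" where
  "prefix_le p q \<longleftrightarrow> (\<exists>s. q = p @ s)"

definition iota_lab :: "'r lab \<Rightarrow> 'r lab \<Rightarrow> bool" where
  "iota_lab \<alpha> \<beta> \<longleftrightarrow> (case und \<alpha> of (p1, Rd1, Wt1) \<Rightarrow> case und \<beta> of (p2, Rd2, Wt2) \<Rightarrow>
     \<not> prefix_le p1 p2 \<and> \<not> prefix_le p2 p1 \<and> Rd1 \<inter> Wt2 = {} \<and> Rd2 \<inter> Wt1 = {})"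

fun diff :: "'r lab \<Rightarrow> 'r ann \<Rightarrow> 'r ann \<Rightarrow> 'r ann" where
  "diff (Fwd a) (V, ER, EW) (V', ER', EW') = (V' - V, ER' - ER, EW' - EW)"
| "diff (Bwd a) (V, ER, EW) (V', ER', EW') = (V - V', ER - ER', EW - EW')"

fun odot :: "'r lab \<Rightarrow> 'r ann \<Rightarrow> 'r ann \<Rightarrow> 'r ann" where
  "odot (Fwd a) (V, ER, EW) (dV, dER, dEW) = (V \<union> dV, ER \<union> dER, EW \<union> dEW)"
| "odot (Bwd a) (V, ER, EW) (dV, dER, dEW) = (V - dV, ER - dER, EW - dEW)"

end

theory Submission
  imports Defs
begin


definition gpath :: "'a \<Rightarrow> ('a \<times> 'a) set \<Rightarrow> 'a list \<Rightarrow> bool" where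
  "gpath z G vs \<longleftrightarrow> vs \<noteq> [] \<and> hd vs = z \<and> {(vs!i, vs!Suc i) | i. Suc i < length vs} = G"

lemma gpath_ne: "gpath z G vs \<Longrightarrow> vs \<noteq> []" unfolding gpath_def by simp
lemma gpath_hd: "gpath z G vs \<Longrightarrow> vs!0 = z" unfolding gpath_def by (metis hd_conv_nth)
lemma gpath_set: "gpath z G vs \<Longrightarrow> {(vs!i, vs!Suc i) | i. Suc i < length vs} = G" unfolding gpath_def by simp

lemma gpath_edge: "gpath z G vs \<Longrightarrow> Suc i < length vs \<Longrightarrow> (vs!i, vs!Suc i) \<in> G"
  unfolding gpath_def by blast

lemma gpath_edgeD: "gpath z G vs \<Longrightarrow> (a,b) \<in> G \<Longrightarrow> \<exists>i. Suc i < length vs \<and> a = vs!i \<and> b = vs!Suc i"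
  unfolding gpath_def by blast

lemma gpath_star: "gpath z G vs \<Longrightarrow> i \<le> k \<Longrightarrow> k < length vs \<Longrightarrow> (vs!i, vs!k) \<in> G\<^sup>*"
proof (induction k)
  case 0 then show ?case by simp
next
  case (Suc k)
  show ?case
  proof (cases "i = Suc k")
    case True then show ?thesis by simp
  next
    case False
    then have "(vs!i, vs!k) \<in> G\<^sup>*" using Suc by simp
    moreover have "(vs!k, vs!Suc k) \<in> G" using gpath_edge[OF Suc.prems(1), of k] Suc.prems(3) by simp
    ultimately show ?thesis by (rule rtrancl_into_rtrancl)
  qed
qed

lemma gpath_last_nodom: assumes "gpath z G vs" "acyclic G" shows "last vs \<notin> Domain G"
proof
  assume "last vs \<in> Domain G"
  then obtain y where "(last vs, y) \<in> G" by blast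
  then obtain j where j: "Suc j < length vs" "last vs = vs!j" "y = vs!Suc j"
    using gpath_edgeD[OF assms(1)] by blast
  have ne: "vs \<noteq> []" using gpath_ne[OF assms(1)] .
  have "(vs!Suc j, vs!(length vs - 1)) \<in> G\<^sup>*" using gpath_star[OF assms(1)] j by simp
  moreover have "(vs!j, vs!Suc j) \<in> G" using gpath_edge[OF assms(1) j(1)] .
  ultimately have "(vs!j, vs!(length vs - 1)) \<in> G\<^sup>+" by simp
  moreover have "vs!(length vs - 1) = vs!j" using j(2) ne by (simp add: last_conv_nth)
  ultimately show False using assms(2) unfolding acyclic_def by simp
qed

lemma gpath_last_range: assumes "gpath z G vs" "G \<noteq> {}" shows "last vs \<in> Range G"
proof -
  obtain a b where "(a,b) \<in> G" using assms(2) by auto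
  then obtain i where "Suc i < length vs" using gpath_edgeD[OF assms(1)] by blast
  then have "(vs!(length vs - 2), vs!Suc (length vs - 2)) \<in> G" using gpath_edge[OF assms(1)] by simp
  moreover have "Suc (length vs - 2) = length vs - 1" using \<open>Suc i < length vs\<close> by simp
  moreover have "last vs = vs!(length vs - 1)" using \<open>Suc i < length vs\<close> by (metis last_conv_nth list.size(3) not_less0)
  ultimately show ?thesis by (metis RangeI)
qed

lemma gpath_nth_eq: assumes "gpath z G vs" "gpath z G ws" "single_valued G"
  shows "i < length vs \<Longrightarrow> i < length ws \<Longrightarrow> vs!i = ws!i"
proof (induction i)
  case 0 then show ?case using gpath_hd assms(1,2) by metis
next
  case (Suc i)
  then have "vs!i = ws!i" by simp
  moreover have "(vs!i, vs!Suc i) \<in> G" "(ws!i, ws!Suc i) \<in> G"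
    using gpath_edge[OF assms(1), of i] gpath_edge[OF assms(2), of i] Suc.prems by simp_all
  ultimately show ?case using assms(3) unfolding single_valued_def by metis
qed

lemma gpath_last_le: assumes "gpath z G vs" "gpath z G ws" "single_valued G" "acyclic G"
  "length vs \<le> length ws" shows "last vs = last ws"
proof -
  have nv: "vs \<noteq> []" "ws \<noteq> []" using gpath_ne[OF assms(1)] gpath_ne[OF assms(2)] by auto
  have l0: "0 < length vs" using nv by simp
  have l1: "length vs - 1 < length ws" "length vs - 1 < length vs" using l0 assms(5) by linarith+
  have eq: "last vs = ws!(length vs - 1)"
    using gpath_nth_eq[OF assms(1-3) l1(2,1)] nv by (simp add: last_conv_nth)
  show ?thesis
  proof (cases "length vs = length ws")
    case True then show ?thesis using eq nv by (simp add: last_conv_nth)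
  next
    case False
    then have s: "Suc (length vs - 1) < length ws" using assms(5) l0 by linarith
    have "(ws!(length vs - 1), ws!Suc (length vs - 1)) \<in> G" by (rule gpath_edge[OF assms(2) s])
    then have "last vs \<in> Domain G" using eq by (metis DomainI)
    then show ?thesis using gpath_last_nodom[OF assms(1,4)] by blast
  qed
qed

lemma gpath_last_unique: assumes "gpath z G vs" "gpath z G ws" "single_valued G" "acyclic G"
  shows "last vs = last ws"
  using gpath_last_le[OF assms] gpath_last_le[OF assms(2,1,3,4)] by (metis nat_le_linear)

lemma gpath_exists:
  "finite G \<Longrightarrow> acyclic G \<Longrightarrow> single_valued G \<Longrightarrow> (\<forall>u w. (u,w) \<in> G \<longrightarrow> u \<noteq> z \<longrightarrow> u \<in> Range G)
   \<Longrightarrow> \<exists>vs. gpath z G vs"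
proof (induction "card G" arbitrary: G rule: less_induct)
  case less
  show ?case
  proof (cases "G = {}")
    case True
    then show ?thesis by (intro exI[of _ "[z]"]) (simp add: gpath_def)
  next
    case False
    have wf: "wf (G\<inverse>)" using finite_acyclic_wf_converse less.prems by blast
    obtain w0 where "w0 \<in> Range G" using False by auto
    then obtain w where w: "w \<in> Range G" "\<forall>y. (y, w) \<in> G\<inverse> \<longrightarrow> y \<notin> Range G"
      using wfE_min[OF wf, of w0 "Range G"] by metis
    have wnd: "w \<notin> Domain G" using w by blast
    obtain u where uw: "(u,w) \<in> G" using w by blast
    define G' where "G' = G - {(u,w)}"
    have cardlt: "card G' < card G" unfolding G'_def by (rule card_Diff1_less[OF less.prems(1) uw])
    have p1: "finite G'" "acyclic G'" "single_valued G'"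
      unfolding G'_def using less.prems(1) apply simp
      using acyclic_subset[OF less.prems(2) Diff_subset] apply simp
      using single_valued_subset[OF Diff_subset less.prems(3)] by simp
    have p4: "\<forall>a b. (a,b) \<in> G' \<longrightarrow> a \<noteq> z \<longrightarrow> a \<in> Range G'"
    proof (intro allI impI)
      fix a b assume ab: "(a,b) \<in> G'" "a \<noteq> z"
      then have "a \<in> Range G" using less.prems(4) unfolding G'_def by blast
      then obtain x where "(x,a) \<in> G" by blast
      moreover have "(x,a) \<noteq> (u,w)" using ab wnd unfolding G'_def by blast
      ultimately show "a \<in> Range G'" unfolding G'_def by blast
    qed
    obtain vs' where vs': "gpath z G' vs'" using less.hyps[OF cardlt p1 p4] by blast
    have nv: "vs' \<noteq> []" using gpath_ne[OF vs'] .
    have "\<exists>j<length vs'. vs'!j = u"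
    proof (cases "u = z")
      case True then show ?thesis using gpath_hd[OF vs'] nv by auto
    next
      case False
      then have "u \<in> Range G" using less.prems(4) uw by blast
      then obtain x where xu: "(x,u) \<in> G" by blast
      have "(x,u) \<noteq> (u,w)" using xu uw wnd by blast
      then have "(x,u) \<in> G'" unfolding G'_def using xu by blast
      then obtain i where "Suc i < length vs'" "x = vs'!i" "u = vs'!Suc i" using gpath_edgeD[OF vs'] by blast
      then show ?thesis by blast
    qed
    then obtain j where j: "j < length vs'" "vs'!j = u" by blast
    have jl: "j = length vs' - 1"
    proof (rule ccontr)
      assume "j \<noteq> length vs' - 1"
      then have sj: "Suc j < length vs'" using j by simp
      then have e: "(u, vs'!Suc j) \<in> G'" using gpath_edge[OF vs'] j by metis
      then have "vs'!Suc j = w" using uw less.prems(3) unfolding G'_def single_valued_def by blast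
      then show False using e unfolding G'_def by blast
    qed
    have lu: "last vs' = u" using j jl nv by (simp add: last_conv_nth)
    define vs where "vs = vs' @ [w]"
    have "{(vs!i, vs!Suc i) | i. Suc i < length vs} = {(vs'!i, vs'!Suc i) | i. Suc i < length vs'} \<union> {(u,w)}"
    proof (intro equalityI subsetI)
      fix e assume "e \<in> {(vs!i, vs!Suc i) | i. Suc i < length vs}"
      then obtain i where i: "e = (vs!i, vs!Suc i)" "Suc i < length vs" by blast
      show "e \<in> {(vs'!i, vs'!Suc i) | i. Suc i < length vs'} \<union> {(u,w)}"
      proof (cases "Suc i < length vs'")
        case True then show ?thesis using i unfolding vs_def by (auto simp: nth_append)
      next
        case False
        then have "i = length vs' - 1" using i nv unfolding vs_def by simp
        then show ?thesis using i nv lu unfolding vs_def by (auto simp: nth_append last_conv_nth)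
      qed
    next
      fix e assume e: "e \<in> {(vs'!i, vs'!Suc i) | i. Suc i < length vs'} \<union> {(u,w)}"
      show "e \<in> {(vs!i, vs!Suc i) | i. Suc i < length vs}"
      proof (cases "e = (u,w)")
        case True
        have "vs!(length vs' - 1) = u" "vs!Suc (length vs' - 1) = w" "Suc (length vs' - 1) < length vs"
          using nv lu unfolding vs_def by (auto simp: nth_append last_conv_nth)
        then have "e = (vs!(length vs' - 1), vs!Suc(length vs' - 1)) \<and> Suc (length vs' - 1) < length vs"
          using True by simp
        then show ?thesis by blast
      next
        case False
        then obtain i where "e = (vs'!i, vs'!Suc i)" "Suc i < length vs'" using e by blast
        then show ?thesis unfolding vs_def by (auto simp: nth_append intro!: exI[of _ i])
      qed
    qed
    also have "\<dots> = G" using gpath_set[OF vs'] uw unfolding G'_def by blast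
    finally have st: "{(vs!i, vs!Suc i) | i. Suc i < length vs} = G" .
    have "hd vs' = z" using gpath_hd[OF vs'] nv by (simp add: hd_conv_nth)
    then have "hd vs = z" "vs \<noteq> []" unfolding vs_def using nv by simp_all
    then have "gpath z G vs" using st unfolding gpath_def by simp
    then show ?thesis by blast
  qed
qed



definition Gr :: "'r \<Rightarrow> 'r edges \<Rightarrow> (node \<times> node) set" where
  "Gr r EW = {(u,w). (u,r,w) \<in> EW}"

lemma r_path_gpath: "r_path r EW vs = gpath None (Gr r EW) vs"
proof -
  define f where "f = (\<lambda>(a::node,b::node). (a,r,b))"
  have inj: "inj f" unfolding f_def inj_def by auto
  have T: "{(vs!i, r, vs!Suc i)|i. Suc i < length vs} = f ` {(vs!i, vs!Suc i)|i. Suc i < length vs}"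
    unfolding f_def by auto
  have S: "{e\<in>EW. fst (snd e) = r} = f ` Gr r EW"
    unfolding f_def Gr_def by force
  show ?thesis unfolding r_path_def gpath_def T S using inj_image_eq_iff[OF inj] by simp
qed

lemma Gr_empty_iff: "(Gr r EW = {}) = (\<not> (\<exists>u v. (u, r, v) \<in> EW))"
  unfolding Gr_def by auto

lemma last_w_alt: "last_w r EW = (if Gr r EW = {} then None
   else (THE v. \<exists>vs. gpath None (Gr r EW) vs \<and> last vs = v))"
  unfolding last_w_def Gr_empty_iff r_path_gpath by simp

lemma last_w_cong: assumes "{e\<in>E1. fst (snd e) = r} = {e\<in>E2. fst (snd e) = r}"
  shows "last_w r E1 = last_w r E2"
proof -
  have "Gr r E1 = Gr r E2"
  proof -
    have "\<And>u w. (u,r,w) \<in> E1 \<longleftrightarrow> (u,r,w) \<in> E2"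
    proof -
      fix u w
      have "(u,r,w) \<in> E1 \<longleftrightarrow> (u,r,w) \<in> {e\<in>E1. fst (snd e) = r}" by simp
      also have "\<dots> \<longleftrightarrow> (u,r,w) \<in> {e\<in>E2. fst (snd e) = r}" using assms by simp
      finally show "(u,r,w) \<in> E1 \<longleftrightarrow> (u,r,w) \<in> E2" by simp
    qed
    then show ?thesis unfolding Gr_def by simp
  qed
  then show ?thesis unfolding last_w_alt by simp
qed

lemma ann_dagD: assumes "ann_dag (V, ER, EW)"
  shows "finite V" "None \<in> V"
    "\<And>p n. Some (p, n) \<in> V \<Longrightarrow> pid_ok p"
    "\<And>p n n'. Some (p, n) \<in> V \<Longrightarrow> n' \<le> n \<Longrightarrow> Some (p, n') \<in> V"
    "ER \<subseteq> V \<times> UNIV \<times> V" "EW \<subseteq> V \<times> UNIV \<times> V"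
    "\<And>v' v'' r v. (v', r, v) \<in> ER \<union> EW \<Longrightarrow> (v'', r, v) \<in> ER \<union> EW \<Longrightarrow> v' = v''"
    "ER \<inter> EW = {}"
    "acyclic (edge_graph (ER \<union> EW))"
    "\<And>v' r v. (v', r, v) \<in> EW \<Longrightarrow> v' \<noteq> None \<Longrightarrow> (\<exists>v''. (v'', r, v') \<in> EW)"
    "\<And>v r v' v''. (v, r, v') \<in> EW \<Longrightarrow> (v, r, v'') \<in> EW \<Longrightarrow> v' = v''"
  using assms unfolding ann_dag_def by (simp_all, blast+)

lemma ann_dagI: assumes "finite V" "None \<in> V"
    "\<And>p n. Some (p, n) \<in> V \<Longrightarrow> pid_ok p"
    "\<And>p n n'. Some (p, n) \<in> V \<Longrightarrow> n' \<le> n \<Longrightarrow> Some (p, n') \<in> V"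
    "ER \<subseteq> V \<times> UNIV \<times> V" "EW \<subseteq> V \<times> UNIV \<times> V"
    "\<And>v' v'' r v. (v', r, v) \<in> ER \<union> EW \<Longrightarrow> (v'', r, v) \<in> ER \<union> EW \<Longrightarrow> v' = v''"
    "ER \<inter> EW = {}"
    "acyclic (edge_graph (ER \<union> EW))"
    "\<And>v' r v. (v', r, v) \<in> EW \<Longrightarrow> v' \<noteq> None \<Longrightarrow> (\<exists>v''. (v'', r, v') \<in> EW)"
    "\<And>v r v' v''. (v, r, v') \<in> EW \<Longrightarrow> (v, r, v'') \<in> EW \<Longrightarrow> v' = v''"
  shows "ann_dag (V, ER, EW)"
  unfolding ann_dag_def case_prod_conv using assms by blast

lemma last_w_props: assumes "ann_dag (V, ER, EW)"
  shows "last_w r EW \<in> V" "last_w r EW \<notin> Domain (Gr r EW)"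
    "last_w r EW \<noteq> None \<Longrightarrow> last_w r EW \<in> Range (Gr r EW)"
proof -
  note D = ann_dagD[OF assms]
  have "last_w r EW \<in> V \<and> last_w r EW \<notin> Domain (Gr r EW) \<and> (last_w r EW \<noteq> None \<longrightarrow> last_w r EW \<in> Range (Gr r EW))"
  proof (cases "Gr r EW = {}")
    case True
    then show ?thesis using D(2) unfolding last_w_alt by simp
  next
    case False
    have sub: "Gr r EW \<subseteq> V \<times> V" using D(6) unfolding Gr_def by blast
    have fin: "finite (Gr r EW)" using finite_subset[OF sub] D(1) by blast
    have "Gr r EW \<subseteq> edge_graph (ER \<union> EW)" unfolding Gr_def edge_graph_def by blast
    then have acy: "acyclic (Gr r EW)" using acyclic_subset D(9) by blast
    have sv: "single_valued (Gr r EW)" unfolding single_valued_def Gr_def using D(11) by blast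
    have c4: "\<forall>u w. (u,w) \<in> Gr r EW \<longrightarrow> u \<noteq> None \<longrightarrow> u \<in> Range (Gr r EW)"
      unfolding Gr_def using D(10) by blast
    obtain vs where vs: "gpath None (Gr r EW) vs" using gpath_exists[OF fin acy sv c4] by blast
    have "(THE v. \<exists>vs. gpath None (Gr r EW) vs \<and> last vs = v) = last vs"
    proof (rule the_equality)
      show "\<exists>vsa. gpath None (Gr r EW) vsa \<and> last vsa = last vs" using vs by blast
    next
      fix v assume "\<exists>ws. gpath None (Gr r EW) ws \<and> last ws = v"
      then obtain ws where "gpath None (Gr r EW) ws" "last ws = v" by blast
      then show "v = last vs" using gpath_last_unique[OF _ vs sv acy] by blast
    qed
    then have eq: "last_w r EW = last vs" unfolding last_w_alt using False by simp
    have "last vs \<in> Range (Gr r EW)" using gpath_last_range[OF vs False] .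
    moreover have "last vs \<notin> Domain (Gr r EW)" using gpath_last_nodom[OF vs acy] .
    moreover have "Range (Gr r EW) \<subseteq> V" using sub by blast
    ultimately show ?thesis unfolding eq by blast
  qed
  then show "last_w r EW \<in> V" "last_w r EW \<notin> Domain (Gr r EW)"
    "last_w r EW \<noteq> None \<Longrightarrow> last_w r EW \<in> Range (Gr r EW)" by blast+
qed

definition newnode :: "pid \<Rightarrow> node set \<Rightarrow> node" where
  "newnode p V = Some (p, nat (max_p p V + 1))"

definition NE :: "'r edges \<Rightarrow> node \<Rightarrow> 'r set \<Rightarrow> 'r edges" where
  "NE EW v R = {newedge r EW v | r. r \<in> R}"

definition cons_ann :: "'r ann \<Rightarrow> 'r lab0 \<Rightarrow> 'r ann" where
  "cons_ann A a = (case A of (V, ER, EW) \<Rightarrow> case a of (p, Rd, Wt) \<Rightarrow>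
     (V \<union> {newnode p V}, ER \<union> NE EW (newnode p V) (Rd - Wt), EW \<union> NE EW (newnode p V) Wt))"

lemma cons_ann_simp: "cons_ann (V, ER, EW) (p, Rd, Wt) =
     (V \<union> {newnode p V}, ER \<union> NE EW (newnode p V) (Rd - Wt), EW \<union> NE EW (newnode p V) Wt)"
  unfolding cons_ann_def by simp

lemma ann_fwd_iff: "ann_fwd A1 a A2 \<longleftrightarrow> ann_dag A1 \<and> ann_dag A2 \<and> A2 = cons_ann A1 a"
  by (cases A1, cases A2, cases a) (auto simp: ann_fwd_def cons_ann_def newnode_def NE_def Let_def)

lemma fin_S: "finite V \<Longrightarrow> finite {n. Some (p, n) \<in> V}"
proof -
  assume "finite V"
  moreover have "{n. Some (p, n) \<in> V} = (\<lambda>n. Some (p, n)) -` V" by auto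
  moreover have "inj (\<lambda>n. Some (p, n))" unfolding inj_def by simp
  ultimately show ?thesis using finite_vimageI by metis
qed

lemma newnode_gt: assumes "finite V" "Some (p, n) \<in> V" shows "n < nat (max_p p V + 1)"
proof -
  have "n \<in> {n. Some (p, n) \<in> V}" using assms by simp
  then have "n \<le> Max {n. Some (p, n) \<in> V}" using Max_ge fin_S[OF assms(1)] by blast
  moreover have "max_p p V = int (Max {n. Some (p, n) \<in> V})" using assms(2) unfolding max_p_def by auto
  ultimately show ?thesis by simp
qed

lemma newnode_notin: "finite V \<Longrightarrow> newnode p V \<notin> V"
  using newnode_gt unfolding newnode_def by blast

lemma newnode_below: assumes "finite V" "\<And>p n n'. Some (p, n) \<in> V \<Longrightarrow> n' \<le> n \<Longrightarrow> Some (p, n') \<in> V"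
  "n < nat (max_p p V + 1)" shows "Some (p, n) \<in> V"
proof (cases "\<exists>n. Some (p, n) \<in> V")
  case True
  then have ne: "{n. Some (p, n) \<in> V} \<noteq> {}" by auto
  have mp: "max_p p V = int (Max {n. Some (p, n) \<in> V})" using True unfolding max_p_def by auto
  have "Max {n. Some (p, n) \<in> V} \<in> {n. Some (p, n) \<in> V}" using Max_in[OF fin_S[OF assms(1)] ne] .
  moreover have "n \<le> Max {n. Some (p, n) \<in> V}" using assms(3) mp by simp
  ultimately show ?thesis using assms(2) by blast
next
  case False
  then have "max_p p V = -1" unfolding max_p_def by simp
  then show ?thesis using assms(3) by simp
qed

lemma max_p_cong: assumes "{n. Some (p, n) \<in> V1} = {n. Some (p, n) \<in> V2}"
  shows "max_p p V1 = max_p p V2"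
proof -
  have "(\<exists>n. Some (p, n) \<in> V1) = (\<exists>n. Some (p, n) \<in> V2)" using assms by (metis mem_Collect_eq)
  then show ?thesis unfolding max_p_def using assms by simp
qed

lemma newnode_add: "q \<noteq> p \<Longrightarrow> newnode p (V \<union> {Some (q, k)}) = newnode p V"
  unfolding newnode_def by (subst max_p_cong[of p _ V]) auto

lemma acyclic_add_sink: assumes "acyclic R" "S \<subseteq> UNIV \<times> {x}" "x \<notin> Domain (R \<union> S)"
  shows "acyclic (R \<union> S)"
proof -
  have key: "(a,b) \<in> (R \<union> S)\<^sup>+ \<Longrightarrow> b \<noteq> x \<Longrightarrow> (a,b) \<in> R\<^sup>+" for a b
  proof (induction rule: trancl_induct)
    case (base y)
    then show ?case using assms(2) by auto
  next
    case (step y z)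
    then have "(y,z) \<in> R" using assms(2) by auto
    moreover have "y \<noteq> x" using step(2) assms(3) by blast
    ultimately show ?case using step by (meson trancl.trancl_into_trancl)
  qed
  show ?thesis unfolding acyclic_def
  proof
    fix y
    show "(y, y) \<notin> (R \<union> S)\<^sup>+"
    proof
      assume yy: "(y, y) \<in> (R \<union> S)\<^sup>+"
      show False
      proof (cases "y = x")
        case True
        then show False using yy assms(3) by (meson DomainI tranclD)
      next
        case False
        then show False using key[OF yy] assms(1) unfolding acyclic_def by blast
      qed
    qed
  qed
qed



lemma edge_graph_Un: "edge_graph (A \<union> B) = edge_graph A \<union> edge_graph B"
  unfolding edge_graph_def by auto

lemma cons_preserves: assumes A: "ann_dag (V, ER, EW)" and pid: "pid_ok p"
  shows "ann_dag (cons_ann (V, ER, EW) (p, Rd, Wt))"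
proof -
  note D = ann_dagD[OF A]
  define v where "v = newnode p V"
  define NR where "NR = NE EW v (Rd - Wt)"
  define NW where "NW = NE EW v Wt"
  have vV: "v \<notin> V" unfolding v_def using newnode_notin[OF D(1)] .
  have lwV: "\<And>r. last_w r EW \<in> V" using last_w_props(1)[OF A] .
  have nt: "\<And>a r b. (a,r,b) \<in> NR \<union> NW \<Longrightarrow> a = last_w r EW \<and> b = v"
    unfolding NR_def NW_def NE_def newedge_def by auto
  have NRsub: "NR \<subseteq> V \<times> (Rd - Wt) \<times> {v}"
    unfolding NR_def NE_def newedge_def using lwV by auto
  have NWsub: "NW \<subseteq> V \<times> Wt \<times> {v}"
    unfolding NW_def NE_def newedge_def using lwV by auto
  have old: "\<And>a r b. (a,r,b) \<in> ER \<union> EW \<Longrightarrow> a \<in> V \<and> b \<in> V" using D(5,6) by blast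
  have cons: "cons_ann (V,ER,EW) (p,Rd,Wt) = (V \<union> {v}, ER \<union> NR, EW \<union> NW)"
    unfolding cons_ann_simp v_def NR_def NW_def ..
  show ?thesis unfolding cons
  proof (rule ann_dagI)
    show "finite (V \<union> {v})" using D(1) by simp
    show "None \<in> V \<union> {v}" using D(2) by simp
    show "\<And>q n. Some (q,n) \<in> V \<union> {v} \<Longrightarrow> pid_ok q" using D(3) pid unfolding v_def newnode_def by auto
    show "\<And>q n n'. Some (q,n) \<in> V \<union> {v} \<Longrightarrow> n' \<le> n \<Longrightarrow> Some (q,n') \<in> V \<union> {v}"
    proof -
      fix q n n' assume h: "Some (q,n) \<in> V \<union> {v}" "n' \<le> n"
      show "Some (q,n') \<in> V \<union> {v}"
      proof (cases "Some (q,n) \<in> V")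
        case True then show ?thesis using D(4) h(2) by blast
      next
        case False
        then have q: "q = p" "n = nat (max_p p V + 1)" using h(1) unfolding v_def newnode_def by auto
        show ?thesis
        proof (cases "n' = n")
          case True then show ?thesis using h(1) by simp
        next
          case False
          then have lt: "n' < nat (max_p p V + 1)" using h(2) q by simp
          have "Some (p, n') \<in> V" by (rule newnode_below[OF D(1) _ lt]) (blast intro: D(4))
          then show ?thesis using q by simp
        qed
      qed
    qed
    show "ER \<union> NR \<subseteq> (V \<union> {v}) \<times> UNIV \<times> (V \<union> {v})" using D(5) NRsub by blast
    show "EW \<union> NW \<subseteq> (V \<union> {v}) \<times> UNIV \<times> (V \<union> {v})" using D(6) NWsub by blast
    show "\<And>v' v'' r w. (v', r, w) \<in> ER \<union> NR \<union> (EW \<union> NW) \<Longrightarrow> (v'', r, w) \<in> ER \<union> NR \<union> (EW \<union> NW) \<Longrightarrow> v' = v''"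
    proof -
      fix v' v'' r w assume h1: "(v', r, w) \<in> ER \<union> NR \<union> (EW \<union> NW)" and h2: "(v'', r, w) \<in> ER \<union> NR \<union> (EW \<union> NW)"
      show "v' = v''"
      proof (cases "w = v")
        case True
        then have "(v',r,w) \<notin> ER \<union> EW" "(v'',r,w) \<notin> ER \<union> EW" using old vV by blast+
        then have "(v',r,w) \<in> NR \<union> NW" "(v'',r,w) \<in> NR \<union> NW" using h1 h2 by blast+
        then show ?thesis using nt by metis
      next
        case False
        then have "(v',r,w) \<notin> NR \<union> NW" "(v'',r,w) \<notin> NR \<union> NW" using nt by blast+
        then have "(v',r,w) \<in> ER \<union> EW" "(v'',r,w) \<in> ER \<union> EW" using h1 h2 by blast+
        then show ?thesis using D(7) by blast
      qed
    qed
    have "ER \<inter> NW = {}" using D(5) NWsub vV by blast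
    moreover have "NR \<inter> EW = {}" using D(6) NRsub vV by blast
    moreover have "NR \<inter> NW = {}" using NRsub NWsub by blast
    ultimately show "(ER \<union> NR) \<inter> (EW \<union> NW) = {}" using D(8) by blast
    have eg: "edge_graph (ER \<union> NR \<union> (EW \<union> NW)) = edge_graph (ER \<union> EW) \<union> edge_graph (NR \<union> NW)"
      by (simp add: edge_graph_Un Un_ac)
    have S: "edge_graph (NR \<union> NW) \<subseteq> UNIV \<times> {v}" unfolding edge_graph_def using NRsub NWsub by blast
    have "Domain (edge_graph (ER \<union> EW) \<union> edge_graph (NR \<union> NW)) \<subseteq> V"
      unfolding edge_graph_def using D(5,6) NRsub NWsub by blast
    then have "v \<notin> Domain (edge_graph (ER \<union> EW) \<union> edge_graph (NR \<union> NW))" using vV by blast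
    then show "acyclic (edge_graph (ER \<union> NR \<union> (EW \<union> NW)))"
      unfolding eg using acyclic_add_sink[OF D(9) S] by blast
    show "\<And>v' r w. (v', r, w) \<in> EW \<union> NW \<Longrightarrow> v' \<noteq> None \<Longrightarrow> \<exists>v''. (v'', r, v') \<in> EW \<union> NW"
    proof -
      fix v' r w assume h: "(v', r, w) \<in> EW \<union> NW" "v' \<noteq> None"
      show "\<exists>v''. (v'', r, v') \<in> EW \<union> NW"
      proof (cases "(v', r, w) \<in> EW")
        case True then show ?thesis using D(10) h(2) by blast
      next
        case False
        then have "v' = last_w r EW" using h(1) nt by blast
        then have "v' \<in> Range (Gr r EW)" using last_w_props(3)[OF A] h(2) by simp
        then show ?thesis unfolding Gr_def by blast
      qed
    qed
    show "\<And>u r w1 w2. (u, r, w1) \<in> EW \<union> NW \<Longrightarrow> (u, r, w2) \<in> EW \<union> NW \<Longrightarrow> w1 = w2"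
    proof -
      fix u r w1 w2 assume h1: "(u, r, w1) \<in> EW \<union> NW" and h2: "(u, r, w2) \<in> EW \<union> NW"
      have nd: "\<And>y. (last_w r EW, r, y) \<notin> EW" using last_w_props(2)[OF A, of r] unfolding Gr_def by blast
      show "w1 = w2"
      proof (cases "(u, r, w1) \<in> EW")
        case T1: True
        show ?thesis
        proof (cases "(u, r, w2) \<in> EW")
          case True then show ?thesis using T1 D(11) by blast
        next
          case False
          then have "u = last_w r EW" using h2 nt by blast
          then show ?thesis using T1 nd by blast
        qed
      next
        case F1: False
        then have u: "u = last_w r EW" "w1 = v" using h1 nt by blast+
        show ?thesis
        proof (cases "(u, r, w2) \<in> EW")
          case True then show ?thesis using u nd by blast
        next
          case False
          then show ?thesis using h2 nt u by blast
        qed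
      qed
    qed
  qed
qed

lemma sink_remove: assumes A: "ann_dag (V, ER, EW)" and x: "x = Some (q, k)"
  and top: "\<And>n. Some (q, n) \<in> V \<Longrightarrow> n \<le> k" and nout: "\<And>r y. (x, r, y) \<notin> ER \<union> EW"
  shows "ann_dag (V - {x}, {e \<in> ER. snd (snd e) \<noteq> x}, {e \<in> EW. snd (snd e) \<noteq> x})"
proof -
  note D = ann_dagD[OF A]
  show ?thesis
  proof (rule ann_dagI)
    show "finite (V - {x})" using D(1) by simp
    show "None \<in> V - {x}" using D(2) x by simp
    show "\<And>p n. Some (p, n) \<in> V - {x} \<Longrightarrow> pid_ok p" using D(3) by blast
    show "\<And>p n n'. Some (p, n) \<in> V - {x} \<Longrightarrow> n' \<le> n \<Longrightarrow> Some (p, n') \<in> V - {x}"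
    proof -
      fix p n n' assume h: "Some (p, n) \<in> V - {x}" "n' \<le> n"
      then have "Some (p, n') \<in> V" using D(4) by blast
      moreover have "Some (p, n') \<noteq> x"
      proof
        assume "Some (p, n') = x"
        then have "p = q" "n' = k" using x by auto
        then have "n \<le> k" using top h(1) by blast
        then have "n = k" using h(2) \<open>n' = k\<close> by simp
        then show False using h(1) x \<open>p = q\<close> by simp
      qed
      ultimately show "Some (p, n') \<in> V - {x}" by blast
    qed
    show "{e \<in> ER. snd (snd e) \<noteq> x} \<subseteq> (V - {x}) \<times> UNIV \<times> (V - {x})"
    proof
      fix e assume e: "e \<in> {e \<in> ER. snd (snd e) \<noteq> x}"
      obtain a r b where eq: "e = (a, r, b)" by (cases e) auto
      show "e \<in> (V - {x}) \<times> UNIV \<times> (V - {x})" using e D(5) nout[of r b] unfolding eq by auto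
    qed
    show "{e \<in> EW. snd (snd e) \<noteq> x} \<subseteq> (V - {x}) \<times> UNIV \<times> (V - {x})"
    proof
      fix e assume e: "e \<in> {e \<in> EW. snd (snd e) \<noteq> x}"
      obtain a r b where eq: "e = (a, r, b)" by (cases e) auto
      show "e \<in> (V - {x}) \<times> UNIV \<times> (V - {x})" using e D(6) nout[of r b] unfolding eq by auto
    qed
    show "\<And>v' v'' r v. (v', r, v) \<in> {e \<in> ER. snd (snd e) \<noteq> x} \<union> {e \<in> EW. snd (snd e) \<noteq> x} \<Longrightarrow>
      (v'', r, v) \<in> {e \<in> ER. snd (snd e) \<noteq> x} \<union> {e \<in> EW. snd (snd e) \<noteq> x} \<Longrightarrow> v' = v''"
      using D(7) by blast
    show "{e \<in> ER. snd (snd e) \<noteq> x} \<inter> {e \<in> EW. snd (snd e) \<noteq> x} = {}" using D(8) by blast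
    have "edge_graph ({e \<in> ER. snd (snd e) \<noteq> x} \<union> {e \<in> EW. snd (snd e) \<noteq> x}) \<subseteq> edge_graph (ER \<union> EW)"
      unfolding edge_graph_def by blast
    then show "acyclic (edge_graph ({e \<in> ER. snd (snd e) \<noteq> x} \<union> {e \<in> EW. snd (snd e) \<noteq> x}))"
      using acyclic_subset[OF D(9)] by blast
    show "\<And>v' r v. (v', r, v) \<in> {e \<in> EW. snd (snd e) \<noteq> x} \<Longrightarrow> v' \<noteq> None \<Longrightarrow>
        \<exists>v''. (v'', r, v') \<in> {e \<in> EW. snd (snd e) \<noteq> x}"
    proof -
      fix v' r v assume h: "(v', r, v) \<in> {e \<in> EW. snd (snd e) \<noteq> x}" "v' \<noteq> None"
      then obtain v'' where "(v'', r, v') \<in> EW" using D(10) by force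
      moreover have "v' \<noteq> x" using h(1) nout by blast
      ultimately show "\<exists>v''. (v'', r, v') \<in> {e \<in> EW. snd (snd e) \<noteq> x}" by auto
    qed
    show "\<And>v r v' v''. (v, r, v') \<in> {e \<in> EW. snd (snd e) \<noteq> x} \<Longrightarrow> (v, r, v'') \<in> {e \<in> EW. snd (snd e) \<noteq> x} \<Longrightarrow> v' = v''"
      using D(11) by blast
  qed
qed



lemma NE_labels: "NE E v R \<subseteq> UNIV \<times> R \<times> {v}" unfolding NE_def newedge_def by auto
lemma NE_src: "(a, r, b) \<in> NE E v R \<Longrightarrow> a = last_w r E" unfolding NE_def newedge_def by auto
lemma NE_disj: "v \<noteq> w \<Longrightarrow> NE E v R \<inter> NE E' w R' = {}" unfolding NE_def newedge_def by auto
lemma NE_cong: "(\<And>r. r \<in> R \<Longrightarrow> last_w r E1 = last_w r E2) \<Longrightarrow> NE E1 v R = NE E2 v R"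
  unfolding NE_def newedge_def by force
lemma last_w_add: "r \<notin> W \<Longrightarrow> last_w r (E \<union> NE E' v W) = last_w r E"
  by (rule last_w_cong) (auto simp: NE_def newedge_def)
lemma NE_add: assumes "R \<inter> W = {}" shows "NE (E \<union> NE E' w W) v R = NE E v R"
proof (rule NE_cong)
  fix r assume "r \<in> R"
  then have "r \<notin> W" using assms by blast
  then show "last_w r (E \<union> NE E' w W) = last_w r E" by (rule last_w_add)
qed
lemma NE_notin: "E \<subseteq> V \<times> UNIV \<times> V \<Longrightarrow> v \<notin> V \<Longrightarrow> NE E' v R \<inter> E = {}"
  using NE_labels by blast
lemma newnode_Some: "newnode p V = Some (p, nat (max_p p V + 1))" unfolding newnode_def ..
lemma newnode_add2: "q \<noteq> p \<Longrightarrow> newnode p (V \<union> {newnode q W}) = newnode p V"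
  unfolding newnode_Some[of q W] by (rule newnode_add)
lemma newnode_ne: "p \<noteq> q \<Longrightarrow> newnode p V \<noteq> newnode q W" unfolding newnode_def by simp

lemma main_aux:
  assumes au: "und \<alpha> = (pa, Rda, Wta)" and bu: "und \<beta> = (pb, Rdb, Wtb)"
    and wa: "Wta \<subseteq> Rda" and wb: "Wtb \<subseteq> Rdb"
    and neq: "pa \<noteq> pb" and dab: "Rda \<inter> Wtb = {}" and dba: "Rdb \<inter> Wta = {}"
    and sa: "ann_step A \<alpha> A'" and sb: "ann_step A \<beta> A''"
  shows "ann_step A'' \<alpha> (odot \<alpha> A'' (diff \<alpha> A A'))"
proof -
  obtain V ER EW where A: "A = (V,ER,EW)" by (cases A) auto
  obtain V1 ER1 EW1 where A1: "A' = (V1,ER1,EW1)" by (cases A') auto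
  obtain V2 ER2 EW2 where A2: "A'' = (V2,ER2,EW2)" by (cases A'') auto
  have neq': "pb \<noteq> pa" using neq by simp
  have Da: "Rda - Wta \<subseteq> Rda" "Wta \<subseteq> Rda" using wa by auto
  have dab': "(Rda - Wta) \<inter> Wtb = {}" "Wta \<inter> Wtb = {}" using dab wa by auto
  have dba': "(Rdb - Wtb) \<inter> Wta = {}" "Wtb \<inter> Wta = {}" using dba wb by auto
  show ?thesis
  proof (cases \<alpha>)
    case FA: (Fwd a0)
    then have a0: "a0 = (pa, Rda, Wta)" using au by simp
    have s1: "ann_fwd (V,ER,EW) (pa,Rda,Wta) (V1,ER1,EW1)" using sa FA a0 A A1 by simp
    then have dA: "ann_dag (V,ER,EW)" and dA1: "ann_dag (V1,ER1,EW1)"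
      and e1: "(V1,ER1,EW1) = cons_ann (V,ER,EW) (pa,Rda,Wta)" unfolding ann_fwd_iff by blast+
    show ?thesis
    proof (cases \<beta>)
      case FB: (Fwd b0)
      then have b0: "b0 = (pb, Rdb, Wtb)" using bu by simp
      have s2: "ann_fwd (V,ER,EW) (pb,Rdb,Wtb) (V2,ER2,EW2)" using sb FB b0 A A2 by simp
      then have dA2: "ann_dag (V2,ER2,EW2)"
        and e2: "(V2,ER2,EW2) = cons_ann (V,ER,EW) (pb,Rdb,Wtb)" unfolding ann_fwd_iff by blast+
      define va where "va = newnode pa V"
      define vb where "vb = newnode pb V"
      have E1: "V1 = V \<union> {va}" "ER1 = ER \<union> NE EW va (Rda - Wta)" "EW1 = EW \<union> NE EW va Wta"
        using e1 unfolding cons_ann_simp va_def by simp_all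
      have E2: "V2 = V \<union> {vb}" "ER2 = ER \<union> NE EW vb (Rdb - Wtb)" "EW2 = EW \<union> NE EW vb Wtb"
        using e2 unfolding cons_ann_simp vb_def by simp_all
      have pid: "pid_ok pa" using ann_dagD(3)[OF dA1, of pa] E1(1) unfolding va_def newnode_def by blast
      have nn: "newnode pa V2 = va" unfolding E2(1) vb_def va_def using newnode_add2[OF neq'] .
      have ne: "NE EW2 va (Rda - Wta) = NE EW va (Rda - Wta)" "NE EW2 va Wta = NE EW va Wta"
        unfolding E2(3) using NE_add dab' by blast+
      have "odot \<alpha> A'' (diff \<alpha> A A') = (V2 \<union> (V1 - V), ER2 \<union> (ER1 - ER), EW2 \<union> (EW1 - EW))"
        using FA A A1 A2 by simp
      also have "\<dots> = (V2 \<union> {va}, ER2 \<union> NE EW va (Rda - Wta), EW2 \<union> NE EW va Wta)"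
        using E1 E2 by auto
      also have "\<dots> = cons_ann A'' (pa, Rda, Wta)" unfolding A2 cons_ann_simp nn ne ..
      finally have res: "odot \<alpha> A'' (diff \<alpha> A A') = cons_ann A'' (pa, Rda, Wta)" .
      have goal: "ann_step A'' \<alpha> (cons_ann A'' (pa,Rda,Wta))" unfolding FA a0 ann_step.simps ann_fwd_iff A2
        using dA2 cons_preserves[OF dA2 pid] by simp
      show ?thesis unfolding res by (rule goal)
    next
      case BB: (Bwd b0)
      then have b0: "b0 = (pb, Rdb, Wtb)" using bu by simp
      have s2: "ann_fwd (V2,ER2,EW2) (pb,Rdb,Wtb) (V,ER,EW)" using sb BB b0 A A2 by simp
      then have dA2: "ann_dag (V2,ER2,EW2)"
        and e2: "(V,ER,EW) = cons_ann (V2,ER2,EW2) (pb,Rdb,Wtb)" unfolding ann_fwd_iff by blast+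
      define va where "va = newnode pa V"
      define vb where "vb = newnode pb V2"
      have E1: "V1 = V \<union> {va}" "ER1 = ER \<union> NE EW va (Rda - Wta)" "EW1 = EW \<union> NE EW va Wta"
        using e1 unfolding cons_ann_simp va_def by simp_all
      have E2: "V = V2 \<union> {vb}" "ER = ER2 \<union> NE EW2 vb (Rdb - Wtb)" "EW = EW2 \<union> NE EW2 vb Wtb"
        using e2 unfolding cons_ann_simp vb_def by simp_all
      note DA = ann_dagD[OF dA]
      have pid: "pid_ok pa" using ann_dagD(3)[OF dA1, of pa] E1(1) unfolding va_def newnode_def by blast
      have nn: "newnode pa V2 = va" unfolding va_def E2(1) vb_def using newnode_add2[OF neq'] by simp
      have ne: "NE EW va (Rda - Wta) = NE EW2 va (Rda - Wta)" "NE EW va Wta = NE EW2 va Wta"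
        unfolding E2(3) using NE_add dab' by blast+
      have vaV: "va \<notin> V" unfolding va_def using newnode_notin[OF DA(1)] .
      have d1: "NE EW va (Rda - Wta) \<inter> ER = {}" "NE EW va Wta \<inter> EW = {}"
        using NE_notin[OF DA(5) vaV] NE_notin[OF DA(6) vaV] by blast+
      have "odot \<alpha> A'' (diff \<alpha> A A') = (V2 \<union> (V1 - V), ER2 \<union> (ER1 - ER), EW2 \<union> (EW1 - EW))"
        using FA A A1 A2 by simp
      also have "\<dots> = (V2 \<union> {va}, ER2 \<union> NE EW va (Rda - Wta), EW2 \<union> NE EW va Wta)"
        using E1 vaV d1 by auto
      also have "\<dots> = cons_ann A'' (pa, Rda, Wta)" unfolding A2 cons_ann_simp nn ne ..
      finally have res: "odot \<alpha> A'' (diff \<alpha> A A') = cons_ann A'' (pa, Rda, Wta)" .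
      have goal: "ann_step A'' \<alpha> (cons_ann A'' (pa,Rda,Wta))" unfolding FA a0 ann_step.simps ann_fwd_iff A2
        using dA2 cons_preserves[OF dA2 pid] by simp
      show ?thesis unfolding res by (rule goal)
    qed
  next
    case BA: (Bwd a0)
    then have a0: "a0 = (pa, Rda, Wta)" using au by simp
    have s1: "ann_fwd (V1,ER1,EW1) (pa,Rda,Wta) (V,ER,EW)" using sa BA a0 A A1 by simp
    then have dA: "ann_dag (V,ER,EW)" and dA1: "ann_dag (V1,ER1,EW1)"
      and e1: "(V,ER,EW) = cons_ann (V1,ER1,EW1) (pa,Rda,Wta)" unfolding ann_fwd_iff by blast+
    define va where "va = newnode pa V1"
    define XR where "XR = NE EW1 va (Rda - Wta)"
    define XW where "XW = NE EW1 va Wta"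
    have E1: "V = V1 \<union> {va}" "ER = ER1 \<union> XR" "EW = EW1 \<union> XW"
      using e1 unfolding cons_ann_simp va_def XR_def XW_def by simp_all
    note DA1 = ann_dagD[OF dA1]
    have vaV1: "va \<notin> V1" unfolding va_def using newnode_notin[OF DA1(1)] .
    have XRt: "XR \<subseteq> UNIV \<times> UNIV \<times> {va}" "XW \<subseteq> UNIV \<times> UNIV \<times> {va}"
      unfolding XR_def XW_def using NE_labels by blast+
    have dX: "XR \<inter> ER1 = {}" "XW \<inter> EW1 = {}"
      unfolding XR_def XW_def using NE_notin[OF DA1(5) vaV1] NE_notin[OF DA1(6) vaV1] by blast+
    have res0: "odot \<alpha> A'' (diff \<alpha> A A') = (V2 - (V - V1), ER2 - (ER - ER1), EW2 - (EW - EW1))"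
      using BA A A1 A2 by simp
    show ?thesis
    proof (cases \<beta>)
      case FB: (Fwd b0)
      then have b0: "b0 = (pb, Rdb, Wtb)" using bu by simp
      have s2: "ann_fwd (V,ER,EW) (pb,Rdb,Wtb) (V2,ER2,EW2)" using sb FB b0 A A2 by simp
      then have dA2: "ann_dag (V2,ER2,EW2)"
        and e2: "(V2,ER2,EW2) = cons_ann (V,ER,EW) (pb,Rdb,Wtb)" unfolding ann_fwd_iff by blast+
      define vb where "vb = newnode pb V"
      define YR where "YR = NE EW vb (Rdb - Wtb)"
      define YW where "YW = NE EW vb Wtb"
      have E2: "V2 = V \<union> {vb}" "ER2 = ER \<union> YR" "EW2 = EW \<union> YW"
        using e2 unfolding cons_ann_simp vb_def YR_def YW_def by simp_all
      have nnb: "newnode pb V1 = vb" unfolding vb_def E1(1) va_def using newnode_add2[OF neq] by simp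
      have neb: "NE EW vb (Rdb - Wtb) = NE EW1 vb (Rdb - Wtb)" "NE EW vb Wtb = NE EW1 vb Wtb"
        unfolding E1(3) XW_def using NE_add dba' by blast+
      have vab: "va \<noteq> vb" unfolding va_def vb_def using newnode_ne[OF neq] .
      have dXY: "XR \<inter> YR = {}" "XW \<inter> YW = {}" unfolding XR_def YR_def XW_def YW_def
        using NE_disj[OF vab] by blast+
      have pidb: "pid_ok pb" using ann_dagD(3)[OF dA2, of pb] E2(1) unfolding vb_def newnode_def by blast
      have r3: "odot \<alpha> A'' (diff \<alpha> A A') = (V1 \<union> {vb}, ER1 \<union> YR, EW1 \<union> YW)"
        unfolding res0 using E1 E2 vab vaV1 dXY by auto
      have c1: "(V1 \<union> {vb}, ER1 \<union> YR, EW1 \<union> YW) = cons_ann A' (pb, Rdb, Wtb)"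
        unfolding A1 cons_ann_simp nnb YR_def YW_def neb ..
      have dA3: "ann_dag (V1 \<union> {vb}, ER1 \<union> YR, EW1 \<union> YW)"
        unfolding c1 A1 by (rule cons_preserves[OF dA1 pidb])
      have nna: "newnode pa (V1 \<union> {vb}) = va" unfolding vb_def va_def using newnode_add2[OF neq'] by simp
      have nea: "NE (EW1 \<union> YW) va (Rda - Wta) = XR" "NE (EW1 \<union> YW) va Wta = XW"
        unfolding YW_def XR_def XW_def using NE_add dab' by blast+
      have "cons_ann (V1 \<union> {vb}, ER1 \<union> YR, EW1 \<union> YW) (pa, Rda, Wta) = (V1 \<union> {vb} \<union> {va}, ER1 \<union> YR \<union> XR, EW1 \<union> YW \<union> XW)"
        unfolding cons_ann_simp nna nea ..
      also have "\<dots> = A''" unfolding A2 E2 E1 by auto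
      finally have c: "A'' = cons_ann (V1 \<union> {vb}, ER1 \<union> YR, EW1 \<union> YW) (pa, Rda, Wta)" by simp
      have goal: "ann_step A'' \<alpha> (V1 \<union> {vb}, ER1 \<union> YR, EW1 \<union> YW)" unfolding BA a0 ann_step.simps ann_fwd_iff
        using dA3 dA2 A2 c by simp
      show ?thesis unfolding r3 by (rule goal)
    next
      case BB: (Bwd b0)
      then have b0: "b0 = (pb, Rdb, Wtb)" using bu by simp
      have s2: "ann_fwd (V2,ER2,EW2) (pb,Rdb,Wtb) (V,ER,EW)" using sb BB b0 A A2 by simp
      then have dA2: "ann_dag (V2,ER2,EW2)"
        and e2: "(V,ER,EW) = cons_ann (V2,ER2,EW2) (pb,Rdb,Wtb)" unfolding ann_fwd_iff by blast+
      define vb where "vb = newnode pb V2"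
      define YR where "YR = NE EW2 vb (Rdb - Wtb)"
      define YW where "YW = NE EW2 vb Wtb"
      have E2: "V = V2 \<union> {vb}" "ER = ER2 \<union> YR" "EW = EW2 \<union> YW"
        using e2 unfolding cons_ann_simp vb_def YR_def YW_def by simp_all
      note DA2 = ann_dagD[OF dA2]
      have vab: "va \<noteq> vb" unfolding va_def vb_def using newnode_ne[OF neq] .
      have dXY: "XR \<inter> YR = {}" "XW \<inter> YW = {}" unfolding XR_def YR_def XW_def YW_def
        using NE_disj[OF vab] by blast+
      have YWl: "YW \<subseteq> UNIV \<times> Wtb \<times> UNIV" unfolding YW_def using NE_labels by blast
      have r3: "odot \<alpha> A'' (diff \<alpha> A A') = (V2 - {va}, ER2 - XR, EW2 - XW)"
        unfolding res0 using E1 vaV1 dX by auto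
      have vaV2: "va \<in> V2" using E1(1) E2(1) vab by blast
      define k where "k = nat (max_p pa V1 + 1)"
      have vak: "va = Some (pa, k)" unfolding va_def k_def newnode_def ..
      have top: "\<And>n. Some (pa, n) \<in> V2 \<Longrightarrow> n \<le> k"
      proof -
        fix n assume "Some (pa, n) \<in> V2"
        then have "Some (pa, n) \<in> V1 \<or> Some (pa, n) = va" using E1(1) E2(1) by blast
        then show "n \<le> k"
        proof
          assume "Some (pa, n) \<in> V1"
          then show "n \<le> k" unfolding k_def using newnode_gt[OF DA1(1)] by (meson less_imp_le)
        next
          assume "Some (pa, n) = va" then show "n \<le> k" using vak by simp
        qed
      qed
      have srcX: "\<And>a r b. (a, r, b) \<in> XR \<union> XW \<Longrightarrow> a \<in> V1"
      proof -
        fix a r b assume "(a, r, b) \<in> XR \<union> XW"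
        then have "a = last_w r EW1" unfolding XR_def XW_def by (auto dest: NE_src)
        then show "a \<in> V1" using last_w_props(1)[OF dA1] by simp
      qed
      have nout: "\<And>r y. (va, r, y) \<notin> ER2 \<union> EW2"
      proof
        fix r y assume "(va, r, y) \<in> ER2 \<union> EW2"
        then have "(va, r, y) \<in> ER1 \<union> EW1 \<union> (XR \<union> XW)" using E1 E2 by blast
        then show False using srcX DA1(5,6) vaV1 by blast
      qed
      have sr: "ann_dag (V2 - {va}, {e \<in> ER2. snd (snd e) \<noteq> va}, {e \<in> EW2. snd (snd e) \<noteq> va})"
        using sink_remove[OF dA2 vak top nout] .
      have tg1: "{e \<in> ER2. snd (snd e) \<noteq> va} = ER2 - XR"
      proof
        show "{e \<in> ER2. snd (snd e) \<noteq> va} \<subseteq> ER2 - XR" using XRt by auto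
        show "ER2 - XR \<subseteq> {e \<in> ER2. snd (snd e) \<noteq> va}"
        proof
          fix e assume e: "e \<in> ER2 - XR"
          then have "e \<in> ER1" using E1(2) E2(2) by blast
          then have "snd (snd e) \<in> V1" using DA1(5) by auto
          then show "e \<in> {e \<in> ER2. snd (snd e) \<noteq> va}" using e vaV1 by auto
        qed
      qed
      have tg2: "{e \<in> EW2. snd (snd e) \<noteq> va} = EW2 - XW"
      proof
        show "{e \<in> EW2. snd (snd e) \<noteq> va} \<subseteq> EW2 - XW" using XRt by auto
        show "EW2 - XW \<subseteq> {e \<in> EW2. snd (snd e) \<noteq> va}"
        proof
          fix e assume e: "e \<in> EW2 - XW"
          then have "e \<in> EW1" using E1(3) E2(3) by blast
          then have "snd (snd e) \<in> V1" using DA1(6) by auto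
          then show "e \<in> {e \<in> EW2. snd (snd e) \<noteq> va}" using e vaV1 by auto
        qed
      qed
      have dA3: "ann_dag (V2 - {va}, ER2 - XR, EW2 - XW)" using sr unfolding tg1 tg2 .
      have "{n. Some (pa, n) \<in> V2 - {va}} = {n. Some (pa, n) \<in> V1}"
      proof -
        have "vb \<noteq> Some (pa, n)" for n unfolding vb_def newnode_def using neq by simp
        then have nb: "\<And>n. vb \<noteq> Some (pa, n)" by blast
        have eqV: "insert vb V2 = insert va V1" using E1(1) E2(1) by simp
        show ?thesis
        proof (rule set_eqI)
          fix n
          have "Some (pa,n) \<in> V2 - {va} \<longleftrightarrow> Some (pa,n) \<in> insert vb V2 \<and> Some (pa,n) \<noteq> vb \<and> Some (pa,n) \<noteq> va"
            using nb[of n] by auto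
          also have "\<dots> \<longleftrightarrow> Some (pa,n) \<in> insert va V1 \<and> Some (pa,n) \<noteq> vb \<and> Some (pa,n) \<noteq> va"
            by (simp only: eqV)
          also have "\<dots> \<longleftrightarrow> Some (pa,n) \<in> V1" using nb[of n] vaV1 by auto
          finally show "n \<in> {n. Some (pa, n) \<in> V2 - {va}} \<longleftrightarrow> n \<in> {n. Some (pa, n) \<in> V1}" by simp
        qed
      qed
      then have nna: "newnode pa (V2 - {va}) = va" unfolding va_def newnode_def using max_p_cong by metis
      have lw: "last_w r (EW2 - XW) = last_w r EW1" if r: "r \<in> Rda" for r
      proof (rule last_w_cong)
        have "r \<notin> Wtb" using r dab by blast
        then show "{e \<in> EW2 - XW. fst (snd e) = r} = {e \<in> EW1. fst (snd e) = r}"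
          using E1(3) E2(3) YWl dX(2) by auto
      qed
      have nea: "NE (EW2 - XW) va (Rda - Wta) = XR" "NE (EW2 - XW) va Wta = XW"
      proof -
        have nea1: "NE (EW2 - XW) va (Rda - Wta) = NE EW1 va (Rda - Wta)" by (rule NE_cong) (use lw in auto)
        have nea2: "NE (EW2 - XW) va Wta = NE EW1 va Wta" by (rule NE_cong) (use lw wa in auto)
        show "NE (EW2 - XW) va (Rda - Wta) = XR" "NE (EW2 - XW) va Wta = XW"
          using nea1 nea2 unfolding XR_def XW_def by simp_all
      qed
      have "cons_ann (V2 - {va}, ER2 - XR, EW2 - XW) (pa, Rda, Wta) = (V2 - {va} \<union> {va}, ER2 - XR \<union> XR, EW2 - XW \<union> XW)"
        unfolding cons_ann_simp nna nea ..
      also have "\<dots> = A''" unfolding A2 using vaV2 E1(2,3) E2(2,3) dXY by auto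
      finally have c: "A'' = cons_ann (V2 - {va}, ER2 - XR, EW2 - XW) (pa, Rda, Wta)" by simp
      have goal: "ann_step A'' \<alpha> (V2 - {va}, ER2 - XR, EW2 - XW)" unfolding BA a0 ann_step.simps ann_fwd_iff
        using dA3 dA2 A2 c by simp
      show ?thesis unfolding r3 by (rule goal)
    qed
  qed
qed


theorem mainTheorem5:
  fixes \<alpha> \<beta> :: "'r lab" and A A' A'' :: "'r ann"
  assumes "und \<alpha> = (p\<^sub>\<alpha>, Rd\<^sub>\<alpha>, Wt\<^sub>\<alpha>)" and "und \<beta> = (p\<^sub>\<beta>, Rd\<^sub>\<beta>, Wt\<^sub>\<beta>)"
    and "Wt\<^sub>\<alpha> \<subseteq> Rd\<^sub>\<alpha>" and "Wt\<^sub>\<beta> \<subseteq> Rd\<^sub>\<beta>"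
    and "iota_lab \<alpha> \<beta>"
    and "ann_step A \<alpha> A'" and "ann_step A \<beta> A''"
  shows "ann_step A'' \<alpha> (odot \<alpha> A'' (diff \<alpha> A A'))"
proof -
  have h: "\<not> prefix_le p\<^sub>\<alpha> p\<^sub>\<beta>" "Rd\<^sub>\<alpha> \<inter> Wt\<^sub>\<beta> = {}" "Rd\<^sub>\<beta> \<inter> Wt\<^sub>\<alpha> = {}"
    using assms(5) unfolding iota_lab_def assms(1,2) by simp_all
  have ne: "p\<^sub>\<alpha> \<noteq> p\<^sub>\<beta>" using h(1) unfolding prefix_le_def by (metis append_Nil2)
  show ?thesis by (rule main_aux[OF assms(1-4) ne h(2,3) assms(6,7)])
qed

end
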